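(* Let $r,k\geq2$ with $(r,k)\neq(2,2)$. There exist positive constants $K_1,K_2,K_3$ such that for any $0<\delta<\frac12$ and $c=c_{r,k}+n^{-\delta}$: $$\mu(c)-\mu_{r,k}=K_1n^{-\delta/2}+O(n^{-\delta}),\quad \alpha(c)-\alpha=K_2n^{-\delta/2}+O(n^{-\delta}),\quad \beta(c)-\beta=K_3n^{-\delta/2}+O(n^{-\delta}).$$
   Context: $f_t(\mu)=e^{-\mu}\sum_{i\geq t}\mu^i/i!$. Let $h(\mu)=\mu/f_{k-1}(\mu)^{r-1}$, $c_{r,k}=\inf_{\mu>0}(r-1)!h(\mu)$, and $\mu_{r,k}$ the unique minimizer, so $c_{r,k}=(r-1)!h(\mu_{r,k})$. For $c\geq c_{r,k}$, $\mu(c)$ is the largest solution of $c=(r-1)!h(\mu)$. Set $\alpha=f_k(\mu_{r,k})$, $\beta=\frac1r\mu_{r,k}f_{k-1}(\mu_{r,k})$, $\alpha(c)=f_k(\mu(c))$, $\beta(c)=\frac1r\mu(c)f_{k-1}(\mu(c))$. *)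

theory Defs
  imports Complex_Main "HOL-Library.Landau_Symbols"
begin

definition ftail :: "nat \<Rightarrow> real \<Rightarrow> real" where
  "ftail t \<mu> = exp (-\<mu>) * (\<Sum>i. \<mu> ^ (i + t) / fact (i + t))"

definition hfun :: "nat \<Rightarrow> nat \<Rightarrow> real \<Rightarrow> real" where
  "hfun r k \<mu> = \<mu> / (ftail (k - 1) \<mu>) ^ (r - 1)"

definition c_rk :: "nat \<Rightarrow> nat \<Rightarrow> real" where
  "c_rk r k = (INF \<mu>\<in>{0<..}. fact (r - 1) * hfun r k \<mu>)"

definition mu_rk :: "nat \<Rightarrow> nat \<Rightarrow> real" where
  "mu_rk r k = (THE \<mu>. \<mu> > 0 \<and> fact (r - 1) * hfun r k \<mu> = c_rk r k)"

definition mu_c :: "nat \<Rightarrow> nat \<Rightarrow> real \<Rightarrow> real" where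
  "mu_c r k c = (GREATEST \<mu>. \<mu> > 0 \<and> c = fact (r - 1) * hfun r k \<mu>)"

definition alpha_rk :: "nat \<Rightarrow> nat \<Rightarrow> real" where
  "alpha_rk r k = ftail k (mu_rk r k)"

definition beta_rk :: "nat \<Rightarrow> nat \<Rightarrow> real" where
  "beta_rk r k = (1 / real r) * mu_rk r k * ftail (k - 1) (mu_rk r k)"

definition alpha_c :: "nat \<Rightarrow> nat \<Rightarrow> real \<Rightarrow> real" where
  "alpha_c r k c = ftail k (mu_c r k c)"

definition beta_c :: "nat \<Rightarrow> nat \<Rightarrow> real \<Rightarrow> real" where
  "beta_c r k c = (1 / real r) * mu_c r k c * ftail (k - 1) (mu_c r k c)"

end

theory Submission
  imports Defs
begin


definition Pp :: "nat \<Rightarrow> real \<Rightarrow> real" where "Pp m x = (\<Sum>i<m. x^i / fact i)"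
definition Ss :: "nat \<Rightarrow> real \<Rightarrow> real" where "Ss t x = (\<Sum>i. x^i / fact (i+t))"

lemma exp_sums': "(\<lambda>i. x^i / fact i) sums exp (x::real)"
  using exp_converges[of x] by (simp add: divide_inverse mult.commute)

lemma ftail_eq: "ftail t x = 1 - exp(-x) * Pp t x"
proof -
  have "(\<lambda>i. x^(i+t)/fact(i+t)) sums (exp x - Pp t x)"
    using sums_split_initial_segment[OF exp_sums', of x t] by (simp add: Pp_def)
  then show ?thesis unfolding ftail_def by (simp add: sums_iff algebra_simps exp_minus field_simps)
qed

lemma Ss_sums: "(\<lambda>i. x^i / fact (i+t)) sums Ss t (x::real)"
proof -
  have "summable (\<lambda>i. \<bar>x\<bar>^i / fact i)" using exp_sums'[of "\<bar>x\<bar>"] by (simp add: sums_iff)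
  moreover have "norm (x^i / fact (i+t)) \<le> \<bar>x\<bar>^i / fact i" for i
  proof -
    have "fact i \<le> (fact (i+t)::real)" by (rule fact_mono) simp
    moreover have "(0::real) < fact i" by simp
    ultimately show ?thesis by (simp add: abs_mult power_abs frac_le)
  qed
  ultimately have "summable (\<lambda>i. x^i / fact (i+t))"
    by (rule summable_comparison_test'[where N=0])
  then show ?thesis unfolding Ss_def by (simp add: summable_sums)
qed

lemma ftail_Ss: "ftail t x = exp(-x) * x^t * Ss t x"
proof -
  have "(\<lambda>i. x^t * (x^i / fact (i+t))) sums (x^t * Ss t x)"
    using sums_mult[OF Ss_sums] by blast
  hence "(\<Sum>i. x ^ (i + t) / fact (i + t)) = x^t * Ss t x"
    by (simp add: sums_iff power_add mult_ac)
  then show ?thesis unfolding ftail_def by simp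
qed

lemma Ss_ge: assumes "x \<ge> 0" "finite I" shows "(\<Sum>i\<in>I. x^i / fact (i+t)) \<le> Ss t x"
  unfolding Ss_def using Ss_sums[of x t] assms
  by (intro sum_le_suminf) (auto simp: sums_iff)

lemma Ss_pos: assumes "x \<ge> 0" shows "Ss t x \<ge> 1 / fact t"
  using Ss_ge[OF assms, of "{0}" t] by simp

lemma Ss_incr: assumes "0 \<le> y" "y \<le> x" shows "Ss t x - Ss t y \<ge> (x - y) / fact (Suc t)"
proof -
  have s: "(\<lambda>i. x^i / fact (i+t) - y^i / fact (i+t)) sums (Ss t x - Ss t y)"
    by (intro sums_diff Ss_sums)
  have "(\<Sum>i\<in>{1}. x^i / fact (i+t) - y^i / fact (i+t)) \<le> Ss t x - Ss t y"
    using s assms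
    by (intro sums_le[OF _ sums_If_finite_set s]) (auto simp: diff_divide_distrib[symmetric] power_mono divide_right_mono)
  then show ?thesis by (simp add: diff_divide_distrib)
qed

lemma Ss_quarter: "Ss t (1/4) \<le> (4/3) / fact t"
proof -
  have g: "(\<lambda>i. (1/4::real)^i / fact t) sums ((1 / (1 - 1/4)) / fact t)"
    using sums_divide[OF geometric_sums[of "1/4::real"], of "fact t"] by simp
  have "Ss t (1/4) \<le> (\<Sum>i. (1/4::real)^i / fact t)"
    unfolding Ss_def
  proof (rule suminf_le)
    show "summable (\<lambda>i. (1/4::real)^i / fact (i+t))" using Ss_sums by (simp add: sums_iff)
    show "summable (\<lambda>i. (1/4::real)^i / fact t)" using g by (simp add: sums_iff)
    fix i show "(1/4::real)^i / fact (i+t) \<le> (1/4)^i / fact t"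
      by (intro divide_left_mono fact_mono) auto
  qed
  also have "\<dots> = (4/3) / fact t" using g by (simp add: sums_iff)
  finally show ?thesis .
qed

lemma DERIV_Pp: "DERIV (Pp (Suc m)) x :> Pp m x"
proof (induction m)
  case 0
  have "Pp (Suc 0) = (\<lambda>x. 1)" by (auto simp: Pp_def)
  then show ?case by (simp add: Pp_def)
next
  case (Suc m)
  have e: "Pp (Suc (Suc m)) = (\<lambda>x. Pp (Suc m) x + x^Suc m / fact (Suc m))"
    by (auto simp: Pp_def)
  have "DERIV (\<lambda>x. Pp (Suc m) x + x^Suc m / fact (Suc m)) x :> Pp m x + (Suc m * x^m) / fact (Suc m)"
    by (intro DERIV_add Suc DERIV_cdivide) (rule DERIV_cong[OF DERIV_pow], simp)
  moreover have "Pp m x + (Suc m * x^m) / fact (Suc m) = Pp (Suc m) x"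
    by (simp add: Pp_def del: of_nat_Suc)
  ultimately show ?case using e by simp
qed

lemma DERIV_ftail: "DERIV (ftail (Suc m)) x :> exp(-x)*x^m/fact m"
proof -
  have e: "ftail (Suc m) = (\<lambda>x. 1 - exp(-x) * Pp (Suc m) x)" by (auto simp: ftail_eq)
  have de: "DERIV (\<lambda>x. exp(-x)) x :> -exp(-x)" by (auto intro!: derivative_eq_intros)
  have "DERIV (\<lambda>x. 1 - exp(-x) * Pp (Suc m) x) x :> 0 - (exp(-x) * (-1) * Pp (Suc m) x + exp(-x) * Pp m x)"
    by (intro DERIV_diff DERIV_const) (rule DERIV_cong[OF DERIV_mult[OF de DERIV_Pp]], simp)
  moreover have "0 - (exp(-x) * (-1) * Pp (Suc m) x + exp(-x) * Pp m x) = exp(-x)*x^m/fact m"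
    by (simp add: Pp_def algebra_simps)
  ultimately show ?thesis using e by simp
qed


lemma DERIV_Pp_all: "DERIV (Pp m) x :> Pp (m - 1) x"
proof (cases m)
  case 0
  have "Pp 0 = (\<lambda>x. 0)" by (auto simp: Pp_def)
  then show ?thesis using 0 by (simp add: Pp_def)
next
  case (Suc n) then show ?thesis using DERIV_Pp by simp
qed

lemma DERIV_Pp_chain [derivative_intros]:
  "(f has_real_derivative D) (at x within s) \<Longrightarrow>
   ((\<lambda>x. Pp m (f x)) has_real_derivative Pp (m - 1) (f x) * D) (at x within s)"
  using DERIV_chain2[OF DERIV_Pp_all] by blast

lemma ftail_pos: "x > 0 \<Longrightarrow> ftail t x > 0"
proof -
  assume x: "x > 0"
  have "Ss t x \<ge> 1 / fact t" using x by (intro Ss_pos) simp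
  moreover have "1 / fact t > (0::real)" by simp
  ultimately have "Ss t x > 0" by linarith
  then show ?thesis using x by (simp add: ftail_Ss)
qed

lemma ftail_le1: "x \<ge> 0 \<Longrightarrow> ftail t x \<le> 1"
proof -
  assume "x \<ge> 0"
  then have "Pp t x \<ge> 0" unfolding Pp_def by (intro sum_nonneg) auto
  then show ?thesis by (simp add: ftail_eq)
qed



definition f1 :: "nat \<Rightarrow> real \<Rightarrow> real" where "f1 k x = exp(-x) * x^(k-2) / fact (k-2)"
definition gg :: "nat \<Rightarrow> real \<Rightarrow> real" where "gg k x = fact (k-2) * ((exp x - Pp (k-1) x) / x^(k-1))"
definition gg1 :: "nat \<Rightarrow> real \<Rightarrow> real" where
  "gg1 k x = fact (k-2) * (((exp x - Pp (k-2) x) * x^(k-1) - (exp x - Pp (k-1) x) * (real (k-1) * x^(k-2))) / (x^(k-1) * x^(k-1)))"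
definition HH :: "nat \<Rightarrow> nat \<Rightarrow> real \<Rightarrow> real" where "HH r k x = fact (r-1) * hfun r k x"
definition ww :: "nat \<Rightarrow> nat \<Rightarrow> real \<Rightarrow> real" where "ww r k x = fact (r-1) * x * f1 k x / ftail (k-1) x ^ r"

locale rk_setup = fixes r k :: nat
  assumes r2: "r \<ge> 2" and k2: "k \<ge> 2" and rk: "(r,k) \<noteq> (2,2)"
begin

lemma kk: "k - 1 = Suc (k-2)" "k = Suc (k-1)" "k - 1 - 1 = k - 2" using k2 by auto

lemma f_deriv: "DERIV (ftail (k-1)) x :> f1 k x"
  using DERIV_ftail[of "k-2" x] kk by (simp add: f1_def)

lemma f_eq: assumes "x > 0" shows "ftail (k-1) x = x * f1 k x * gg k x"
proof -
  have e: "x^(k-1) = x * x^(k-2)" using kk by (metis power_Suc)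
  have "x * f1 k x * gg k x = exp(-x) * (exp x - Pp (k-1) x) * ((x * x^(k-2)) / x^(k-1))"
    using assms by (simp add: f1_def gg_def field_simps)
  also have "\<dots> = exp(-x) * (exp x - Pp (k-1) x)" using assms e by simp
  also have "\<dots> = ftail (k-1) x" by (simp add: ftail_eq algebra_simps exp_minus field_simps)
  finally show ?thesis by simp
qed

lemma gg_Ss: assumes "x > 0" shows "gg k x = fact (k-2) * Ss (k-1) x"
proof -
  have "exp(-x) * x^(k-1) * Ss (k-1) x = 1 - exp(-x) * Pp (k-1) x"
    using ftail_Ss ftail_eq by metis
  then have "x^(k-1) * Ss (k-1) x = exp x - Pp (k-1) x"
    by (simp add: exp_minus field_simps)
  then have "gg k x = fact (k-2) * ((x^(k-1) * Ss (k-1) x) / x^(k-1))" by (simp add: gg_def)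
  then show ?thesis using assms by simp
qed

lemma gg_incr: assumes "0 < y" "y < x" shows "gg k x - gg k y \<ge> fact (k-2) * (x - y) / fact k"
proof -
  have "Ss (k-1) x - Ss (k-1) y \<ge> (x - y) / fact k"
    using Ss_incr[of y x "k-1"] assms kk by simp
  then have "fact (k-2) * (Ss (k-1) x - Ss (k-1) y) \<ge> fact (k-2) * ((x - y) / fact k)"
    by (intro mult_left_mono) auto
  then show ?thesis using assms gg_Ss[of x] gg_Ss[of y] by (simp add: algebra_simps)
qed

lemma gg_strict: assumes "0 < y" "y < x" shows "gg k y < gg k x"
proof -
  have "fact (k-2) * (x - y) / fact k > 0" using assms by simp
  then show ?thesis using gg_incr[OF assms] by linarith
qed

lemma fact_k1: "fact (k-1) = real (k-1) * fact (k-2)"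
  using kk by (metis fact_Suc of_nat_fact of_nat_mult)
lemma fact_k: "fact k = real k * (real (k-1) * fact (k-2))"
  using kk fact_k1 by (metis fact_Suc of_nat_fact of_nat_mult)

lemma gg_quarter: "gg k (1/4) < real r - 1"
proof -
  have "gg k (1/4) = fact (k-2) * Ss (k-1) (1/4)" by (rule gg_Ss) simp
  also have "\<dots> \<le> fact (k-2) * ((4/3) / fact (k-1))" by (rule mult_left_mono[OF Ss_quarter]) simp
  also have "\<dots> = (4/3) / real (k-1)" unfolding fact_k1 using k2 by (simp add: field_simps)
  also have "\<dots> < real r - 1"
  proof (cases "k = 2")
    case True then have "r \<ge> 3" using r2 rk by auto
    then show ?thesis using True by simp
  next
    case False then have "real (k-1) \<ge> 2" using k2 by linarith
    then have "(4/3) / real (k-1) \<le> (4/3) / 2" by (intro divide_left_mono) auto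
    moreover have "real r - 1 \<ge> 1" using r2 by simp
    moreover have "(4/3::real)/2 < 1" by simp
    ultimately show ?thesis by (meson order_le_less_trans order_less_le_trans)
  qed
  finally show ?thesis .
qed

lemma gg_large: "gg k (real (r * k * (k-1))) > real r - 1"
proof -
  define X where "X = real (r * k * (k-1))"
  have X: "X > 0" using r2 k2 by (simp add: X_def)
  have "Ss (k-1) X \<ge> (\<Sum>i\<in>{1}. X^i / fact (i + (k-1)))" using X by (intro Ss_ge) auto
  then have "Ss (k-1) X \<ge> X / fact k" using kk by simp
  then have "fact (k-2) * Ss (k-1) X \<ge> fact (k-2) * (X / fact k)" by (rule mult_left_mono) simp
  then have "gg k X \<ge> fact (k-2) * (X / fact k)" using gg_Ss[OF X] by simp
  also have "fact (k-2) * (X / fact k) = real r"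
    using k2 r2 by (simp add: X_def fact_k field_simps)
  finally show ?thesis unfolding X_def by simp
qed

lemma gg_cont: "continuous_on {0<..} (gg k)"
  unfolding gg_def Pp_def by (intro continuous_intros) auto

lemma gg_deriv: assumes "x > 0" shows "DERIV (gg k) x :> gg1 k x"
proof -
  have kk4: "k - 1 - Suc 0 = k - 2" by simp
  have dp: "DERIV (\<lambda>x. x^(k-1)) x :> real (k-1) * x^(k-2)" using DERIV_pow[of "k-1" x] unfolding kk4 .
  have dn: "DERIV (\<lambda>x. exp x - Pp (k-1) x) x :> exp x - Pp (k-2) x"
    using DERIV_diff[OF DERIV_exp DERIV_Pp_all[of "k-1"]] kk(3) by simp
  have "DERIV (\<lambda>x. fact (k-2) * ((exp x - Pp (k-1) x) / x^(k-1))) x :> gg1 k x"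
    unfolding gg1_def using assms by (intro DERIV_cmult DERIV_divide[OF dn dp]) simp
  then show ?thesis by (simp add: gg_def[abs_def])
qed

lemma gg1_diff: assumes "x > 0" shows "\<exists>D. DERIV (gg1 k) x :> D"
  unfolding gg1_def[abs_def] apply (rule exI) using assms
  by (auto intro!: derivative_eq_intros)

lemma HH_deriv: assumes x: "x > 0" shows "DERIV (HH r k) x :> ww r k x * (gg k x - (real r - 1))"
proof -
  define n where "n = r - 1"
  have rn: "r = Suc n" "n \<ge> 1" using r2 by (auto simp: n_def)
  define f where "f = ftail (k-1) x"
  have fp: "f > 0" using ftail_pos x by (simp add: f_def)
  have d: "DERIV (HH r k) x :> fact n * ((1 * f^n - x * (real n * (f1 k x * f^(n - Suc 0)))) / (f^n * f^n))"
    unfolding HH_def[abs_def] hfun_def f_def n_def using fp[unfolded f_def]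
    by (intro DERIV_cmult DERIV_divide DERIV_ident DERIV_power f_deriv) auto
  have fe: "f = x * f1 k x * gg k x" using f_eq x by (simp add: f_def)
  obtain m where m: "n = Suc m" using rn by (cases n) auto
  have "fact n * ((1 * f^n - x * (real n * (f1 k x * f^(n - Suc 0)))) / (f^n * f^n))
      = fact n * f^m * (f - x * real n * f1 k x) / (f^m * f^(Suc (Suc m)))"
    using fp m by (simp add: field_simps power_Suc)
  also have "\<dots> = fact n * (f - x * real n * f1 k x) / f^(Suc (Suc m))"
    using fp by simp
  also have "\<dots> = fact n * (x * f1 k x * (gg k x - (real r - 1))) / f^r"
    using fe rn m by (simp add: algebra_simps)
  also have "\<dots> = ww r k x * (gg k x - (real r - 1))"
    unfolding ww_def by (simp add: f_def n_def)
  finally show ?thesis using d by simp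
qed

end


lemma deriv_lip:
  fixes \<phi> :: "real \<Rightarrow> real"
  assumes "DERIV \<phi> x0 :> D"
  shows "\<exists>\<rho>>0. \<exists>M\<ge>0. \<forall>x. \<bar>x - x0\<bar> < \<rho> \<longrightarrow> \<bar>\<phi> x - \<phi> x0\<bar> \<le> M * \<bar>x - x0\<bar>"
proof -
  have "((\<lambda>y. (\<phi> y - \<phi> x0) / (y - x0)) \<longlongrightarrow> D) (at x0)"
    using assms by (simp add: has_field_derivative_iff)
  then have "eventually (\<lambda>y. dist ((\<phi> y - \<phi> x0) / (y - x0)) D < 1) (at x0)"
    by (rule tendstoD) simp
  then obtain d where d: "d > 0" "\<And>y. y \<noteq> x0 \<Longrightarrow> dist y x0 < d \<Longrightarrow> dist ((\<phi> y - \<phi> x0) / (y - x0)) D < 1"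
    unfolding eventually_at by auto
  have "\<bar>\<phi> x - \<phi> x0\<bar> \<le> (\<bar>D\<bar> + 1) * \<bar>x - x0\<bar>" if "\<bar>x - x0\<bar> < d" for x
  proof (cases "x = x0")
    case False
    then have "\<bar>(\<phi> x - \<phi> x0) / (x - x0) - D\<bar> < 1" using d(2)[of x] that by (simp add: dist_real_def)
    then have q: "\<bar>(\<phi> x - \<phi> x0) / (x - x0)\<bar> \<le> \<bar>D\<bar> + 1" by linarith
    have "\<bar>\<phi> x - \<phi> x0\<bar> = \<bar>(\<phi> x - \<phi> x0) / (x - x0)\<bar> * \<bar>x - x0\<bar>"
      using False by (simp add: abs_divide)
    also have "\<dots> \<le> (\<bar>D\<bar> + 1) * \<bar>x - x0\<bar>" using q by (intro mult_right_mono) auto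
    finally show ?thesis .
  qed simp
  then show ?thesis using d(1) by (intro exI[of _ d] conjI exI[of _ "\<bar>D\<bar> + 1"]) auto
qed

lemma deriv_taylor2:
  fixes \<phi> \<phi>' :: "real \<Rightarrow> real"
  assumes "\<rho>0 > 0" "\<And>x. \<bar>x - x0\<bar> < \<rho>0 \<Longrightarrow> DERIV \<phi> x :> \<phi>' x" "DERIV \<phi>' x0 :> D2"
  shows "\<exists>\<rho>>0. \<exists>M\<ge>0. \<forall>x. \<bar>x - x0\<bar> < \<rho> \<longrightarrow> \<bar>\<phi> x - \<phi> x0 - \<phi>' x0 * (x - x0)\<bar> \<le> M * (x - x0)^2"
proof -
  obtain \<rho>1 M where r1: "\<rho>1 > 0" "M \<ge> 0" "\<And>x. \<bar>x - x0\<bar> < \<rho>1 \<Longrightarrow> \<bar>\<phi>' x - \<phi>' x0\<bar> \<le> M * \<bar>x - x0\<bar>"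
    using deriv_lip[OF assms(3)] by blast
  define \<rho> where "\<rho> = min \<rho>0 \<rho>1"
  have \<rho>: "\<rho> > 0" using r1 assms(1) by (simp add: \<rho>_def)
  define \<psi> where "\<psi> y = \<phi> y - \<phi>' x0 * y" for y
  have dpsi: "DERIV \<psi> y :> \<phi>' y - \<phi>' x0" if "\<bar>y - x0\<bar> < \<rho>0" for y
    unfolding \<psi>_def[abs_def] using assms(2)[OF that]
    by (auto intro!: derivative_eq_intros)
  have main: "\<bar>\<phi> x - \<phi> x0 - \<phi>' x0 * (x - x0)\<bar> \<le> M * (x - x0)^2" if x: "\<bar>x - x0\<bar> < \<rho>" for x
  proof -
    consider "x = x0" | "x0 < x" | "x < x0" by linarith
    then show ?thesis
    proof cases
      case 1 then show ?thesis by simp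
    next
      case 2
      obtain z where z: "x0 < z" "z < x" "\<psi> x - \<psi> x0 = (x - x0) * (\<phi>' z - \<phi>' x0)"
        using MVT2[OF 2, of \<psi> "\<lambda>y. \<phi>' y - \<phi>' x0"] dpsi x 2 by (fastforce simp: \<rho>_def)
      have "\<bar>\<phi>' z - \<phi>' x0\<bar> \<le> M * \<bar>z - x0\<bar>" using r1(3)[of z] z x 2 by (simp add: \<rho>_def)
      also have "\<dots> \<le> M * \<bar>x - x0\<bar>" using z r1(2) by (intro mult_left_mono) auto
      finally have "\<bar>x - x0\<bar> * \<bar>\<phi>' z - \<phi>' x0\<bar> \<le> \<bar>x - x0\<bar> * (M * \<bar>x - x0\<bar>)"
        by (intro mult_left_mono) auto
      moreover have "\<phi> x - \<phi> x0 - \<phi>' x0 * (x - x0) = (x - x0) * (\<phi>' z - \<phi>' x0)"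
        using z(3) by (simp add: \<psi>_def algebra_simps)
      then have "\<bar>\<phi> x - \<phi> x0 - \<phi>' x0 * (x - x0)\<bar> = \<bar>x - x0\<bar> * \<bar>\<phi>' z - \<phi>' x0\<bar>"
        by (simp add: abs_mult)
      moreover have "\<bar>x - x0\<bar> * (M * \<bar>x - x0\<bar>) = M * (x - x0)^2"
        by (simp add: power2_eq_square algebra_simps abs_mult_self_eq)
      ultimately show ?thesis by linarith
    next
      case 3
      obtain z where z: "x < z" "z < x0" "\<psi> x0 - \<psi> x = (x0 - x) * (\<phi>' z - \<phi>' x0)"
        using MVT2[OF 3, of \<psi> "\<lambda>y. \<phi>' y - \<phi>' x0"] dpsi x 3 by (fastforce simp: \<rho>_def)
      have "\<bar>\<phi>' z - \<phi>' x0\<bar> \<le> M * \<bar>z - x0\<bar>" using r1(3)[of z] z x 3 by (simp add: \<rho>_def)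
      also have "\<dots> \<le> M * \<bar>x - x0\<bar>" using z r1(2) by (intro mult_left_mono) auto
      finally have "\<bar>x - x0\<bar> * \<bar>\<phi>' z - \<phi>' x0\<bar> \<le> \<bar>x - x0\<bar> * (M * \<bar>x - x0\<bar>)"
        by (intro mult_left_mono) auto
      moreover have "\<phi> x - \<phi> x0 - \<phi>' x0 * (x - x0) = (x - x0) * (\<phi>' z - \<phi>' x0)"
        using z(3) by (simp add: \<psi>_def algebra_simps)
      then have "\<bar>\<phi> x - \<phi> x0 - \<phi>' x0 * (x - x0)\<bar> = \<bar>x - x0\<bar> * \<bar>\<phi>' z - \<phi>' x0\<bar>"
        by (simp add: abs_mult)
      moreover have "\<bar>x - x0\<bar> * (M * \<bar>x - x0\<bar>) = M * (x - x0)^2"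
        by (simp add: power2_eq_square algebra_simps abs_mult_self_eq)
      ultimately show ?thesis by linarith
    qed
  qed
  show ?thesis using \<rho> r1(2) main by blast
qed

lemma compose_expansion:
  fixes m \<phi> :: "real \<Rightarrow> real"
  assumes K: "K1 > 0" and e0: "\<epsilon>0 > 0"
    and md: "\<And>\<epsilon>. 0 < \<epsilon> \<Longrightarrow> \<epsilon> < \<epsilon>0 \<Longrightarrow> \<bar>m \<epsilon> - x0 - K1 * sqrt \<epsilon>\<bar> \<le> N * \<epsilon>"
    and \<rho>: "\<rho> > 0" and M: "M \<ge> 0"
    and ph: "\<And>x. \<bar>x - x0\<bar> < \<rho> \<Longrightarrow> \<bar>\<phi> x - \<phi> x0 - D * (x - x0)\<bar> \<le> M * (x - x0)^2"
  shows "\<exists>\<epsilon>1>0. \<exists>N'. \<forall>\<epsilon>. 0 < \<epsilon> \<and> \<epsilon> < \<epsilon>1 \<longrightarrow> \<bar>\<phi> (m \<epsilon>) - \<phi> x0 - D * K1 * sqrt \<epsilon>\<bar> \<le> N' * \<epsilon>"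
proof -
  define B where "B = K1 + \<bar>N\<bar>"
  have B: "B > 0" using K by (simp add: B_def)
  define \<epsilon>1 where "\<epsilon>1 = min \<epsilon>0 (min 1 ((\<rho> / (B + 1))^2))"
  have e1: "\<epsilon>1 > 0" using e0 \<rho> B by (simp add: \<epsilon>1_def)
  have "\<bar>\<phi> (m \<epsilon>) - \<phi> x0 - D * K1 * sqrt \<epsilon>\<bar> \<le> (M * B^2 + \<bar>D\<bar> * \<bar>N\<bar>) * \<epsilon>"
    if e: "0 < \<epsilon>" "\<epsilon> < \<epsilon>1" for \<epsilon>
  proof -
    define d where "d = m \<epsilon> - x0"
    have dN: "\<bar>d - K1 * sqrt \<epsilon>\<bar> \<le> N * \<epsilon>" using md[of \<epsilon>] e by (simp add: d_def \<epsilon>1_def)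
    have e1': "\<epsilon> < 1" using e by (simp add: \<epsilon>1_def)
    have "sqrt \<epsilon> * sqrt \<epsilon> \<le> 1 * sqrt \<epsilon>"
      using e e1' by (intro mult_right_mono) auto
    moreover have "sqrt \<epsilon> * sqrt \<epsilon> = \<epsilon>" using e by simp
    ultimately have se: "\<epsilon> \<le> sqrt \<epsilon>" by linarith
    have s0: "sqrt \<epsilon> \<ge> 0" using e by simp
    have "N * \<epsilon> \<le> \<bar>N\<bar> * \<epsilon>" using e by (intro mult_right_mono) auto
    moreover have "K1 * sqrt \<epsilon> \<ge> 0" using K s0 by simp
    ultimately have "\<bar>d\<bar> \<le> K1 * sqrt \<epsilon> + \<bar>N\<bar> * \<epsilon>" using dN
      by (smt (verit))
    also have "\<dots> \<le> K1 * sqrt \<epsilon> + \<bar>N\<bar> * sqrt \<epsilon>" using se by (intro add_left_mono mult_left_mono) auto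
    finally have dB: "\<bar>d\<bar> \<le> B * sqrt \<epsilon>" by (simp add: B_def algebra_simps)
    have "\<epsilon> < (\<rho> / (B + 1))^2" using e by (simp add: \<epsilon>1_def)
    then have "sqrt \<epsilon> < sqrt ((\<rho> / (B + 1))^2)" by (rule real_sqrt_less_mono)
    then have sr: "sqrt \<epsilon> < \<rho> / (B + 1)" using \<rho> B by simp
    have "B * sqrt \<epsilon> \<le> (B + 1) * sqrt \<epsilon>" using s0 by (simp add: mult_right_mono)
    also have "\<dots> < (B + 1) * (\<rho> / (B + 1))" using sr B by (intro mult_strict_left_mono) auto
    also have "\<dots> = \<rho>" using B by simp
    finally have "\<bar>d\<bar> < \<rho>" using dB by linarith
    then have p: "\<bar>\<phi> (m \<epsilon>) - \<phi> x0 - D * d\<bar> \<le> M * d^2" using ph[of "m \<epsilon>"] by (simp add: d_def)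
    have "d^2 \<le> (B * sqrt \<epsilon>)^2" using dB by (metis abs_ge_zero power2_abs power_mono)
    also have "\<dots> = B^2 * \<epsilon>" using e by (simp add: power_mult_distrib)
    finally have q: "M * d^2 \<le> M * (B^2 * \<epsilon>)" using M by (intro mult_left_mono)
    have "\<bar>D * d - D * K1 * sqrt \<epsilon>\<bar> = \<bar>D\<bar> * \<bar>d - K1 * sqrt \<epsilon>\<bar>" by (simp add: abs_mult[symmetric] algebra_simps)
    also have "\<dots> \<le> \<bar>D\<bar> * (\<bar>N\<bar> * \<epsilon>)" using dN e by (intro mult_left_mono) (auto intro: order.trans[OF _ mult_right_mono[of N "\<bar>N\<bar>"]])
    finally have r: "\<bar>D * d - D * K1 * sqrt \<epsilon>\<bar> \<le> \<bar>D\<bar> * (\<bar>N\<bar> * \<epsilon>)" .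
    have "\<bar>\<phi> (m \<epsilon>) - \<phi> x0 - D * K1 * sqrt \<epsilon>\<bar> \<le> \<bar>\<phi> (m \<epsilon>) - \<phi> x0 - D * d\<bar> + \<bar>D * d - D * K1 * sqrt \<epsilon>\<bar>"
      by linarith
    also have "\<dots> \<le> M * (B^2 * \<epsilon>) + \<bar>D\<bar> * (\<bar>N\<bar> * \<epsilon>)" using p q r by linarith
    finally show ?thesis by (simp add: algebra_simps)
  qed
  then show ?thesis using e1 by blast
qed

lemma landau_from_eps:
  fixes F :: "real \<Rightarrow> real"
  assumes e1: "\<epsilon>1 > 0" and b: "\<And>\<epsilon>. 0 < \<epsilon> \<Longrightarrow> \<epsilon> < \<epsilon>1 \<Longrightarrow> \<bar>F \<epsilon> - K * sqrt \<epsilon>\<bar> \<le> N * \<epsilon>"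
    and \<delta>: "\<delta> > 0"
  shows "(\<lambda>n::nat. F (real n powr (-\<delta>)) - K * real n powr (-\<delta>/2)) \<in> O(\<lambda>n. real n powr (-\<delta>))"
proof (rule bigoI[where c = N])
  have "((\<lambda>n. real n powr (-\<delta>)) \<longlongrightarrow> 0) at_top"
    using \<delta> by (intro tendsto_neg_powr filterlim_real_sequentially) auto
  then have ev1: "eventually (\<lambda>n. real n powr (-\<delta>) < \<epsilon>1) at_top"
    using e1 by (rule order_tendstoD)
  show "eventually (\<lambda>n::nat. norm (F (real n powr (-\<delta>)) - K * real n powr (-\<delta>/2)) \<le> N * norm (real n powr (-\<delta>))) at_top"
    using ev1 eventually_gt_at_top[of 0]
  proof eventually_elim
    case (elim n)
    define \<epsilon> where "\<epsilon> = real n powr (-\<delta>)"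
    have ep: "\<epsilon> > 0" using elim by (simp add: \<epsilon>_def)
    have "real n powr (-\<delta>/2) = sqrt \<epsilon>" unfolding \<epsilon>_def by (rule powr_half_sqrt_powr) simp
    then show ?case using b[of \<epsilon>] ep elim by (simp add: \<epsilon>_def)
  qed
qed


context rk_setup begin

lemma ms_ex: "\<exists>x>0. gg k x = real r - 1"
proof -
  define X where "X = real (r * k * (k-1))"
  have "0 < r * k * (k-1)" using r2 k2 by simp
  then have X: "1/4 \<le> X" unfolding X_def by linarith
  have cX: "continuous_on {1/4..X} (gg k)"
    by (rule continuous_on_subset[OF gg_cont]) auto
  then obtain x where "1/4 \<le> x" "x \<le> X" "gg k x = real r - 1"
    using IVT'[OF less_imp_le[OF gg_quarter] less_imp_le[OF gg_large[folded X_def]] X cX] by blast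
  then show ?thesis by (intro exI[of _ x]) auto
qed

definition ms where "ms = (SOME x. x > 0 \<and> gg k x = real r - 1)"

lemma ms: "ms > 0" "gg k ms = real r - 1"
  using someI_ex[OF ms_ex[unfolded Bex_def]] unfolding ms_def by auto

lemma gg_lt: "0 < x \<Longrightarrow> x < ms \<Longrightarrow> gg k x < real r - 1"
  using gg_strict ms by metis
lemma gg_gt: "ms < x \<Longrightarrow> gg k x > real r - 1"
  using gg_strict ms by metis

lemma f1_pos: "x > 0 \<Longrightarrow> f1 k x > 0"
  by (simp add: f1_def)

lemma ww_pos: "x > 0 \<Longrightarrow> ww r k x > 0"
  using f1_pos ftail_pos by (simp add: ww_def)

lemma HH_cont: "0 < a \<Longrightarrow> continuous_on {a..b} (HH r k)"
  by (intro continuous_at_imp_continuous_on ballI DERIV_isCont[OF HH_deriv]) auto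

lemma HH_dec: assumes "0 < a" "a < b" "b \<le> ms" shows "HH r k b < HH r k a"
proof (rule DERIV_neg_imp_decreasing_open[OF assms(2) _ HH_cont[OF assms(1)]])
  fix x assume x: "a < x" "x < b"
  then have "ww r k x * (gg k x - (real r - 1)) < 0"
    using ww_pos[of x] gg_lt[of x] assms by (intro mult_pos_neg) auto
  then show "\<exists>y. DERIV (HH r k) x :> y \<and> y < 0" using HH_deriv[of x] x assms by auto
qed

lemma HH_inc: assumes "ms \<le> a" "a < b" shows "HH r k a < HH r k b"
proof (rule DERIV_pos_imp_increasing_open[OF assms(2) _ HH_cont])
  fix x assume x: "a < x" "x < b"
  then have "ww r k x * (gg k x - (real r - 1)) > 0"
    using ww_pos[of x] gg_gt[of x] assms ms by (intro mult_pos_pos) auto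
  then show "\<exists>y. DERIV (HH r k) x :> y \<and> y > 0" using HH_deriv[of x] x assms ms by auto
qed (use assms ms in auto)

lemma HH_min_strict: "x > 0 \<Longrightarrow> x \<noteq> ms \<Longrightarrow> HH r k ms < HH r k x"
  using HH_dec[of x ms] HH_inc[of ms x] by (cases "x < ms") auto

lemma HH_min: "x > 0 \<Longrightarrow> HH r k ms \<le> HH r k x"
  using HH_min_strict[of x] by (cases "x = ms") auto

lemma c_eq: "c_rk r k = HH r k ms"
proof -
  have "c_rk r k = Inf (HH r k ` {0<..})" by (simp add: c_rk_def HH_def)
  also have "\<dots> = HH r k ms" using ms HH_min by (intro cInf_eq_minimum) auto
  finally show ?thesis .
qed

lemma mu_eq: "mu_rk r k = ms"
proof -
  have "mu_rk r k = (THE \<mu>. \<mu> > 0 \<and> HH r k \<mu> = HH r k ms)" by (simp add: mu_rk_def HH_def c_eq)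
  also have "\<dots> = ms" using ms HH_min_strict by (intro the_equality) force+
  finally show ?thesis .
qed

lemma HH_ge: assumes "x > 0" shows "HH r k x \<ge> fact (r-1) * x"
proof -
  have f: "ftail (k-1) x > 0" "ftail (k-1) x \<le> 1" using ftail_pos ftail_le1 assms by auto
  then have p: "ftail (k-1) x ^ (r-1) > 0" "ftail (k-1) x ^ (r-1) \<le> 1" by (auto intro: power_le_one)
  then have "x \<le> x / ftail (k-1) x ^ (r-1)" using assms by (simp add: le_divide_eq)
  then show ?thesis unfolding HH_def hfun_def by (intro mult_left_mono) auto
qed

lemma muc: assumes e: "\<epsilon> > 0"
  shows "ms < mu_c r k (HH r k ms + \<epsilon>) \<and> HH r k (mu_c r k (HH r k ms + \<epsilon>)) = HH r k ms + \<epsilon>"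
proof -
  define c where "c = HH r k ms + \<epsilon>"
  have Hp: "HH r k ms > 0" using ms ftail_pos by (simp add: HH_def hfun_def)
  define X where "X = ms + c / fact (r-1)"
  have cp: "c > 0" using Hp e by (simp add: c_def)
  have X: "ms \<le> X" using cp by (simp add: X_def)
  have "HH r k X \<ge> fact (r-1) * X" using HH_ge X ms by simp
  moreover have "fact (r-1) * X \<ge> c" using ms by (simp add: X_def field_simps)
  ultimately have "c \<le> HH r k X" by linarith
  moreover have "HH r k ms \<le> c" using e by (simp add: c_def)
  ultimately obtain m where m: "ms \<le> m" "m \<le> X" "HH r k m = c"
    using IVT'[of "HH r k" ms c X] X HH_cont[of ms X] ms by auto
  have mm: "ms < m" using m e by (cases "m = ms") (auto simp: c_def)
  have "mu_c r k c = (GREATEST \<mu>. \<mu> > 0 \<and> c = HH r k \<mu>)" by (simp add: mu_c_def HH_def)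
  also have "\<dots> = m"
  proof (rule Greatest_equality)
    show "m > 0 \<and> c = HH r k m" using m mm ms by auto
    fix y assume y: "y > 0 \<and> c = HH r k y"
    show "y \<le> m"
    proof (rule ccontr)
      assume "\<not> y \<le> m"
      then have "HH r k m < HH r k y" using HH_inc[of m y] mm by auto
      then show False using y m by auto
    qed
  qed
  finally show ?thesis using m mm by (simp add: c_def)
qed

end


context rk_setup begin

lemma gg1_pos: "gg1 k ms > 0"
proof -
  define c0 :: real where "c0 = fact (k-2) / fact k"
  have c0: "c0 > 0" by (simp add: c0_def)
  have "((\<lambda>y. (gg k y - gg k ms) / (y - ms)) \<longlongrightarrow> gg1 k ms) (at ms)"
    using gg_deriv[OF ms(1)] by (simp add: has_field_derivative_iff)
  then have t: "((\<lambda>y. (gg k y - gg k ms) / (y - ms)) \<longlongrightarrow> gg1 k ms) (at_right ms)"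
    by (rule tendsto_within_subset) auto
  have "eventually (\<lambda>y. c0 \<le> (gg k y - gg k ms) / (y - ms)) (at_right ms)"
    unfolding eventually_at_right_field
  proof (intro exI[of _ "ms + 1"] conjI allI impI)
    fix y assume y: "ms < y" "y < ms + 1"
    have "gg k y - gg k ms \<ge> fact (k-2) * (y - ms) / fact k" using gg_incr[of ms y] ms y by auto
    then show "c0 \<le> (gg k y - gg k ms) / (y - ms)" using y by (simp add: c0_def pos_le_divide_eq)
  qed simp
  then have "c0 \<le> gg1 k ms" using t by (intro tendsto_lowerbound) auto
  then show ?thesis using c0 by linarith
qed

lemma ftail_fun: "ftail t = (\<lambda>x. 1 - exp(-x) * Pp t x)"
  by (auto simp: ftail_eq)

lemma ww_diff: "\<exists>D. DERIV (ww r k) ms :> D"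
proof -
  have p: "1 - exp(-ms) * Pp (k-1) ms \<noteq> 0" using ftail_pos[OF ms(1), of "k-1"] by (simp add: ftail_eq)
  show ?thesis unfolding ww_def[abs_def] f1_def ftail_fun apply (rule exI)
    using p by (auto intro!: derivative_eq_intros)
qed

lemma H_expand: "\<exists>A>0. \<exists>\<rho>>0. \<exists>L\<ge>0. \<forall>s. 0 \<le> s \<and> s \<le> \<rho> \<longrightarrow>
   \<bar>HH r k (ms + s) - HH r k ms - A/2 * s^2\<bar> \<le> L * s^3"
proof -
  obtain Dw where Dw: "DERIV (ww r k) ms :> Dw" using ww_diff by blast
  obtain \<rho>1 Mw where w: "\<rho>1 > 0" "Mw \<ge> 0" "\<And>x. \<bar>x - ms\<bar> < \<rho>1 \<Longrightarrow> \<bar>ww r k x - ww r k ms\<bar> \<le> Mw * \<bar>x - ms\<bar>"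
    using deriv_lip[OF Dw] by blast
  obtain D2 where D2: "DERIV (gg1 k) ms :> D2" using gg1_diff ms by blast
  have gd: "\<And>x. \<bar>x - ms\<bar> < ms \<Longrightarrow> DERIV (gg k) x :> gg1 k x" by (rule gg_deriv) auto
  obtain \<rho>2 Mg where g: "\<rho>2 > 0" "Mg \<ge> 0"
     "\<And>x. \<bar>x - ms\<bar> < \<rho>2 \<Longrightarrow> \<bar>gg k x - gg k ms - gg1 k ms * (x - ms)\<bar> \<le> Mg * (x - ms)^2"
    using deriv_taylor2[OF ms(1) gd D2] by blast
  define \<rho> where "\<rho> = min (min \<rho>1 \<rho>2) ms / 2"
  have \<rho>: "\<rho> > 0" "\<rho> < \<rho>1" "\<rho> < \<rho>2" "\<rho> < ms" using w g ms by (auto simp: \<rho>_def)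
  define A where "A = ww r k ms * gg1 k ms"
  have A: "A > 0" using ww_pos[OF ms(1)] gg1_pos by (simp add: A_def)
  define W where "W = \<bar>ww r k ms\<bar> + Mw * \<rho>"
  define L where "L = W * Mg + Mw * \<bar>gg1 k ms\<bar>"
  have W: "W \<ge> 0" using w \<rho> by (simp add: W_def)
  have L: "L \<ge> 0" using W g w by (simp add: L_def)
  define H' where "H' u = ww r k (ms + u) * (gg k (ms + u) - (real r - 1)) - A * u" for u
  have dH: "DERIV (\<lambda>u. HH r k (ms + u) - A/2 * u^2) u :> H' u" if "0 \<le> u" for u
  proof -
    have "DERIV (\<lambda>u. HH r k (ms + u)) u :> ww r k (ms + u) * (gg k (ms + u) - (real r - 1)) * 1"
      using ms that by (intro DERIV_chain2[OF HH_deriv]) (auto intro!: derivative_eq_intros)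
    then show ?thesis unfolding H'_def by (auto intro!: derivative_eq_intros)
  qed
  have bH: "\<bar>H' u\<bar> \<le> L * u^2" if u: "0 \<le> u" "u \<le> \<rho>" for u
  proof -
    have x1: "\<bar>(ms + u) - ms\<bar> < \<rho>1" "\<bar>(ms + u) - ms\<bar> < \<rho>2" using u \<rho> by auto
    have wl: "\<bar>ww r k (ms + u) - ww r k ms\<bar> \<le> Mw * u" using w(3)[OF x1(1)] u by simp
    have gl: "\<bar>gg k (ms + u) - (real r - 1) - gg1 k ms * u\<bar> \<le> Mg * u^2" using g(3)[OF x1(2)] ms by simp
    have wb: "\<bar>ww r k (ms + u)\<bar> \<le> W"
    proof -
      have "Mw * u \<le> Mw * \<rho>" using u w by (intro mult_left_mono) auto
      then show ?thesis using wl unfolding W_def by linarith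
    qed
    have "H' u = ww r k (ms + u) * (gg k (ms + u) - (real r - 1) - gg1 k ms * u)
                 + (ww r k (ms + u) - ww r k ms) * (gg1 k ms * u)"
      unfolding H'_def A_def by (simp add: algebra_simps)
    then have "\<bar>H' u\<bar> \<le> \<bar>ww r k (ms + u)\<bar> * \<bar>gg k (ms + u) - (real r - 1) - gg1 k ms * u\<bar>
                 + \<bar>ww r k (ms + u) - ww r k ms\<bar> * (\<bar>gg1 k ms\<bar> * u)"
      using u by (simp add: abs_mult) (metis abs_triangle_ineq abs_mult abs_of_nonneg)
    also have "\<dots> \<le> W * (Mg * u^2) + (Mw * u) * (\<bar>gg1 k ms\<bar> * u)"
      using wb gl wl u g w by (intro add_mono mult_mono) auto
    also have "\<dots> = L * u^2" by (simp add: L_def algebra_simps power2_eq_square)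
    finally show ?thesis .
  qed
  have "\<bar>HH r k (ms + s) - HH r k ms - A/2 * s^2\<bar> \<le> L * s^3" if s: "0 \<le> s" "s \<le> \<rho>" for s
  proof (cases "s = 0")
    case False
    then have s0: "0 < s" using s by simp
    obtain z where z: "0 < z" "z < s"
      "(HH r k (ms + s) - A/2 * s^2) - (HH r k (ms + 0) - A/2 * 0^2) = (s - 0) * H' z"
      using MVT2[OF s0, of "\<lambda>u. HH r k (ms + u) - A/2 * u^2" H'] dH by force
    have "\<bar>H' z\<bar> \<le> L * z^2" using bH[of z] z s by simp
    also have "\<dots> \<le> L * s^2" using z L by (intro mult_left_mono power_mono) auto
    finally have "s * \<bar>H' z\<bar> \<le> s * (L * s^2)" using s0 by (intro mult_left_mono) auto
    moreover have "\<bar>HH r k (ms + s) - HH r k ms - A/2 * s^2\<bar> = s * \<bar>H' z\<bar>"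
      using z(3) s0 by (simp add: abs_mult algebra_simps)
    ultimately show ?thesis by (simp add: power3_eq_cube power2_eq_square algebra_simps)
  qed simp
  then show ?thesis using A \<rho> L by blast
qed

end


context rk_setup begin

lemma d_expand: "\<exists>K1>0. \<exists>\<epsilon>0>0. \<exists>N. \<forall>\<epsilon>. 0 < \<epsilon> \<and> \<epsilon> < \<epsilon>0 \<longrightarrow>
   \<bar>mu_c r k (HH r k ms + \<epsilon>) - ms - K1 * sqrt \<epsilon>\<bar> \<le> N * \<epsilon>"
proof -
  obtain A \<rho> L where A: "A > 0" "\<rho> > 0" "L \<ge> 0" and ex:
    "\<And>s. 0 \<le> s \<Longrightarrow> s \<le> \<rho> \<Longrightarrow> \<bar>HH r k (ms + s) - HH r k ms - A/2 * s^2\<bar> \<le> L * s^3"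
    using H_expand by blast
  define \<rho>' where "\<rho>' = min \<rho> (A / (4 * (L + 1)))"
  have r1: "\<rho>' > 0" "\<rho>' \<le> \<rho>" using A by (auto simp: \<rho>'_def)
  have "L * \<rho>' \<le> L * (A / (4 * (L + 1)))" using A by (intro mult_left_mono) (auto simp: \<rho>'_def)
  also have "\<dots> = (A / 4) * (L / (L + 1))" using A by (simp add: field_simps)
  also have "\<dots> \<le> (A / 4) * 1" using A by (intro mult_left_mono) auto
  finally have r2': "L * \<rho>' \<le> A / 4" by simp
  have low: "HH r k (ms + s) - HH r k ms \<ge> A/4 * s^2" if s: "0 \<le> s" "s \<le> \<rho>'" for s
  proof -
    have "L * s \<le> L * \<rho>'" using s A by (intro mult_left_mono) auto
    then have "L * s * s^2 \<le> A/4 * s^2" using r2' by (intro mult_right_mono) auto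
    then have "L * s^3 \<le> A/4 * s^2" by (simp add: power3_eq_cube power2_eq_square algebra_simps)
    moreover have "\<bar>HH r k (ms + s) - HH r k ms - A/2 * s^2\<bar> \<le> L * s^3" using ex s r1 by auto
    ultimately show ?thesis by linarith
  qed
  define \<epsilon>0 where "\<epsilon>0 = A/4 * \<rho>'^2"
  have e0: "\<epsilon>0 > 0" using A r1 by (simp add: \<epsilon>0_def)
  define K1 where "K1 = sqrt (2 / A)"
  have K1: "K1 > 0" using A by (simp add: K1_def)
  define N where "N = 8 * L / A^2"
  have "\<bar>mu_c r k (HH r k ms + \<epsilon>) - ms - K1 * sqrt \<epsilon>\<bar> \<le> N * \<epsilon>" if e: "0 < \<epsilon>" "\<epsilon> < \<epsilon>0" for \<epsilon>
  proof -
    define m where "m = mu_c r k (HH r k ms + \<epsilon>)"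
    have m: "ms < m" "HH r k m = HH r k ms + \<epsilon>" using muc[OF e(1)] by (auto simp: m_def)
    define d where "d = m - ms"
    have d0: "d > 0" using m by (simp add: d_def)
    have dr: "d < \<rho>'"
    proof (rule ccontr)
      assume "\<not> d < \<rho>'"
      then have "ms + \<rho>' \<le> m" by (simp add: d_def)
      then have "HH r k (ms + \<rho>') \<le> HH r k m" using HH_inc[of "ms + \<rho>'" m] r1
        by (cases "ms + \<rho>' = m") auto
      moreover have "HH r k (ms + \<rho>') - HH r k ms \<ge> \<epsilon>0" using low[of \<rho>'] r1 by (simp add: \<epsilon>0_def)
      ultimately show False using m e by linarith
    qed
    have md: "ms + d = m" by (simp add: d_def)
    have dd: "A/4 * d^2 \<le> \<epsilon>" using low[of d] d0 dr m md by auto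
    have e3: "\<bar>\<epsilon> - A/2 * d^2\<bar> \<le> L * d^3" using ex[of d] d0 dr r1 m md by auto
    define s0 where "s0 = K1 * sqrt \<epsilon>"
    have s0p: "s0 \<ge> 0" using K1 e by (simp add: s0_def)
    have s02: "s0^2 = 2 / A * \<epsilon>" using A e by (simp add: s0_def K1_def power_mult_distrib)
    have "d^2 - s0^2 = (2 / A) * (A/2 * d^2 - \<epsilon>)" using A s02 by (simp add: field_simps)
    then have "\<bar>d^2 - s0^2\<bar> = \<bar>2 / A\<bar> * \<bar>A/2 * d^2 - \<epsilon>\<bar>" by (simp only: abs_mult)
    also have "\<dots> = (2 / A) * \<bar>\<epsilon> - A/2 * d^2\<bar>" using A by (simp add: abs_minus_commute)
    also have "\<dots> \<le> (2 / A) * (L * d^3)" using e3 A by (intro mult_left_mono) auto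
    also have "\<dots> \<le> (2 / A) * (L * (d^2 * (d + s0)))"
      using A d0 s0p by (intro mult_left_mono) (auto simp: power3_eq_cube power2_eq_square algebra_simps)
    also have "\<dots> = ((2 / A) * L * d^2) * (d + s0)" by (simp add: algebra_simps add_divide_distrib)
    finally have le1: "\<bar>d^2 - s0^2\<bar> \<le> ((2 / A) * L * d^2) * (d + s0)" .
    have "(d - s0) * (d + s0) = d^2 - s0^2" by (simp add: power2_eq_square algebra_simps)
    then have "\<bar>d^2 - s0^2\<bar> = \<bar>d - s0\<bar> * \<bar>d + s0\<bar>" by (metis abs_mult)
    also have "\<bar>d + s0\<bar> = d + s0" using d0 s0p by simp
    finally have "\<bar>d - s0\<bar> * (d + s0) \<le> ((2 / A) * L * d^2) * (d + s0)" using le1 by simp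
    moreover have "d + s0 > 0" using d0 s0p by simp
    ultimately have "\<bar>d - s0\<bar> \<le> (2 / A) * L * d^2" by (rule mult_right_le_imp_le)
    also have "\<dots> \<le> (2 / A) * L * (4 / A * \<epsilon>)"
    proof -
      have "d^2 \<le> 4 / A * \<epsilon>" using dd A by (simp add: field_simps)
      then show ?thesis using A r1 \<open>L \<ge> 0\<close> by (intro mult_left_mono) auto
    qed
    also have "\<dots> = N * \<epsilon>" by (simp add: N_def power2_eq_square field_simps)
    finally show ?thesis by (simp add: d_def m_def s0_def)
  qed
  then show ?thesis using K1 e0 by blast
qed

end


context rk_setup begin

lemma main_loc: "\<exists>K1 K2 K3 :: real. K1 > 0 \<and> K2 > 0 \<and> K3 > 0 \<and>
    (\<forall>\<delta>::real. 0 < \<delta> \<and> \<delta> < 1/2 \<longrightarrow>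
      (\<lambda>n::nat. mu_c r k (c_rk r k + real n powr (-\<delta>)) - mu_rk r k
          - K1 * real n powr (-\<delta>/2)) \<in> O(\<lambda>n. real n powr (-\<delta>)) \<and>
      (\<lambda>n::nat. alpha_c r k (c_rk r k + real n powr (-\<delta>)) - alpha_rk r k
          - K2 * real n powr (-\<delta>/2)) \<in> O(\<lambda>n. real n powr (-\<delta>)) \<and>
      (\<lambda>n::nat. beta_c r k (c_rk r k + real n powr (-\<delta>)) - beta_rk r k
          - K3 * real n powr (-\<delta>/2)) \<in> O(\<lambda>n. real n powr (-\<delta>)))"
proof -
  obtain K1 \<epsilon>0 N where K1: "K1 > 0" "\<epsilon>0 > 0" and
    dN: "\<And>\<epsilon>. 0 < \<epsilon> \<Longrightarrow> \<epsilon> < \<epsilon>0 \<Longrightarrow> \<bar>mu_c r k (HH r k ms + \<epsilon>) - ms - K1 * sqrt \<epsilon>\<bar> \<le> N * \<epsilon>"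
    using d_expand by blast
  have sk: "Suc (k-1) = k" using k2 by simp
  define fa' :: "real \<Rightarrow> real" where "fa' x = exp(-x) * x^(k-1) / fact (k-1)" for x
  have fa: "\<And>x. \<bar>x - ms\<bar> < 1 \<Longrightarrow> DERIV (ftail k) x :> fa' x"
    using DERIV_ftail[of "k-1"] unfolding sk fa'_def by blast
  have "\<exists>D. DERIV fa' ms :> D"
    unfolding fa'_def[abs_def] by (rule exI) (auto intro!: derivative_eq_intros)
  then obtain Da2 where Da2: "DERIV fa' ms :> Da2" by blast
  obtain \<rho>a Ma where pa: "\<rho>a > 0" "Ma \<ge> 0"
    "\<And>x. \<bar>x - ms\<bar> < \<rho>a \<Longrightarrow> \<bar>ftail k x - ftail k ms - fa' ms * (x - ms)\<bar> \<le> Ma * (x - ms)^2"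
    using deriv_taylor2[OF zero_less_one fa Da2] by blast
  obtain \<epsilon>a Na where ca: "\<epsilon>a > 0" "\<And>\<epsilon>. 0 < \<epsilon> \<and> \<epsilon> < \<epsilon>a \<Longrightarrow>
     \<bar>ftail k (mu_c r k (HH r k ms + \<epsilon>)) - ftail k ms - fa' ms * K1 * sqrt \<epsilon>\<bar> \<le> Na * \<epsilon>"
    using compose_expansion[where m = "\<lambda>\<epsilon>. mu_c r k (HH r k ms + \<epsilon>)" and \<phi> = "ftail k",
        OF K1 dN pa] by blast
  define fb :: "real \<Rightarrow> real" where "fb x = 1 / real r * x * ftail (k-1) x" for x
  define fb' :: "real \<Rightarrow> real" where "fb' x = 1 / real r * 1 * ftail (k-1) x + f1 k x * (1 / real r * x)" for x
  have fb: "\<And>x. \<bar>x - ms\<bar> < 1 \<Longrightarrow> DERIV fb x :> fb' x"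
    unfolding fb_def[abs_def] fb'_def by (intro DERIV_mult DERIV_cmult DERIV_ident f_deriv)
  obtain Db2 where Db2: "DERIV fb' ms :> Db2"
  proof -
    have p: "1 - exp(-ms) * Pp (k-1) ms \<noteq> 0" using ftail_pos[OF ms(1), of "k-1"] by (simp add: ftail_eq)
    have "\<exists>D. DERIV fb' ms :> D"
      unfolding fb'_def[abs_def] f1_def ftail_fun apply (rule exI) using p r2 by (auto intro!: derivative_eq_intros)
    then show ?thesis using that by blast
  qed
  obtain \<rho>b Mb where pb: "\<rho>b > 0" "Mb \<ge> 0"
    "\<And>x. \<bar>x - ms\<bar> < \<rho>b \<Longrightarrow> \<bar>fb x - fb ms - fb' ms * (x - ms)\<bar> \<le> Mb * (x - ms)^2"
    using deriv_taylor2[OF zero_less_one fb Db2] by blast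
  obtain \<epsilon>b Nb where cb: "\<epsilon>b > 0" "\<And>\<epsilon>. 0 < \<epsilon> \<and> \<epsilon> < \<epsilon>b \<Longrightarrow>
     \<bar>fb (mu_c r k (HH r k ms + \<epsilon>)) - fb ms - fb' ms * K1 * sqrt \<epsilon>\<bar> \<le> Nb * \<epsilon>"
    using compose_expansion[where m = "\<lambda>\<epsilon>. mu_c r k (HH r k ms + \<epsilon>)" and \<phi> = fb,
        OF K1 dN pb] by blast
  have fa'p: "fa' ms > 0" using ms by (simp add: fa'_def)
  have fb'p: "fb' ms > 0" using ms ftail_pos[OF ms(1), of "k-1"] f1_pos[OF ms(1)] r2 by (simp add: fb'_def add_pos_pos)
  show ?thesis
  proof (rule exI[of _ K1], rule exI[of _ "fa' ms * K1"], rule exI[of _ "fb' ms * K1"], intro conjI allI impI)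
    show "K1 > 0" "fa' ms * K1 > 0" "fb' ms * K1 > 0" using K1 fa'p fb'p by auto
    fix \<delta> :: real assume d: "0 < \<delta> \<and> \<delta> < 1/2"
    show "(\<lambda>n::nat. mu_c r k (c_rk r k + real n powr (-\<delta>)) - mu_rk r k
          - K1 * real n powr (-\<delta>/2)) \<in> O(\<lambda>n. real n powr (-\<delta>))"
      unfolding c_eq mu_eq
      by (rule landau_from_eps[where F = "\<lambda>\<epsilon>. mu_c r k (HH r k ms + \<epsilon>) - ms", OF K1(2) dN]) (use d in auto)
    show "(\<lambda>n::nat. alpha_c r k (c_rk r k + real n powr (-\<delta>)) - alpha_rk r k
          - fa' ms * K1 * real n powr (-\<delta>/2)) \<in> O(\<lambda>n. real n powr (-\<delta>))"
      unfolding c_eq alpha_c_def alpha_rk_def mu_eq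
      by (rule landau_from_eps[where F = "\<lambda>\<epsilon>. ftail k (mu_c r k (HH r k ms + \<epsilon>)) - ftail k ms", OF ca(1)]) (use d ca(2) in auto)
    show "(\<lambda>n::nat. beta_c r k (c_rk r k + real n powr (-\<delta>)) - beta_rk r k
          - fb' ms * K1 * real n powr (-\<delta>/2)) \<in> O(\<lambda>n. real n powr (-\<delta>))"
      unfolding c_eq beta_c_def beta_rk_def mu_eq
      by (rule landau_from_eps[where F = "\<lambda>\<epsilon>. fb (mu_c r k (HH r k ms + \<epsilon>)) - fb ms", OF cb(1), unfolded fb_def]) (use d cb(2) in \<open>auto simp: fb_def\<close>)
  qed
qed

end

theorem lemma34:
  fixes r k :: nat
  assumes "r \<ge> 2" and "k \<ge> 2" and "(r, k) \<noteq> (2, 2)"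
  shows "\<exists>K1 K2 K3 :: real. K1 > 0 \<and> K2 > 0 \<and> K3 > 0 \<and>
    (\<forall>\<delta>::real. 0 < \<delta> \<and> \<delta> < 1/2 \<longrightarrow>
      (\<lambda>n::nat. mu_c r k (c_rk r k + real n powr (-\<delta>)) - mu_rk r k
          - K1 * real n powr (-\<delta>/2)) \<in> O(\<lambda>n. real n powr (-\<delta>)) \<and>
      (\<lambda>n::nat. alpha_c r k (c_rk r k + real n powr (-\<delta>)) - alpha_rk r k
          - K2 * real n powr (-\<delta>/2)) \<in> O(\<lambda>n. real n powr (-\<delta>)) \<and>
      (\<lambda>n::nat. beta_c r k (c_rk r k + real n powr (-\<delta>)) - beta_rk r k
          - K3 * real n powr (-\<delta>/2)) \<in> O(\<lambda>n. real n powr (-\<delta>)))"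
proof -
  interpret rk_setup r k using assms by unfold_locales auto
  show ?thesis by (rule main_loc)
qed


end
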